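(* For all distinct $a,b\in\mathbb{B}^2$, \[ h_{\mathbb{B}^2}(a,b)\le\rho_{\mathbb{B}^2}(a,b)\le\frac{h_{\mathbb{B}^2}(a,b)}{\sqrt{1-m^2}}, \] where $m$ is the Euclidean distance from the origin to the line $L[a,b]$ through $a$ and $b$. Equality holds if $m=0$.
   Context: $\mathbb{B}^2$ is the unit disk. Hyperbolic metric: $\mathrm{sh}\frac{\rho_{\mathbb{B}^2}(a,b)}{2}=\frac{|a-b|}{\sqrt{(1-|a|^2)(1-|b|^2)}}$. Hilbert metric: for distinct $a,b$ in a bounded convex domain $G$, let $u,v$ be the intersections of the line through $a,b$ with $\partial G$, ordered $u,a,b,v$ on the line; $h_G(a,b)=\log\frac{|u-b||a-v|}{|u-a||b-v|}$. *)

theory Defs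
  imports "HOL-Analysis.Analysis"
begin

definition unit_disk :: "complex set" where
  "unit_disk = ball 0 1"

definition rho_disk :: "complex \<Rightarrow> complex \<Rightarrow> real" where
  "rho_disk a b = 2 * arsinh (cmod (a - b) / sqrt ((1 - (cmod a)\<^sup>2) * (1 - (cmod b)\<^sup>2)))"

text \<open>Hilbert metric of a bounded convex domain G: u and v are the boundary points of the
  line through a and b, ordered u, a, b, v on the line, i.e. u = a + t(b-a) with t < 0 and
  v = a + t(b-a) with t > 1.\<close>

definition hilbert_metric :: "complex set \<Rightarrow> complex \<Rightarrow> complex \<Rightarrow> real" where
  "hilbert_metric G a b =
     (let u = (THE u. u \<in> frontier G \<and> (\<exists>t::real. t < 0 \<and> u = a + of_real t * (b - a)));
          v = (THE v. v \<in> frontier G \<and> (\<exists>t::real. t > 1 \<and> v = a + of_real t * (b - a)))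
      in ln ((cmod (u - b) * cmod (a - v)) / (cmod (u - a) * cmod (b - v))))"

end

theory Submission imports Defs begin

lemma sinh_scale:
  fixes r z :: real assumes r: "0 < r" "r \<le> 1" and z: "0 \<le> z"
  shows "sinh (r * z) \<le> r * sinh z"
proof -
  let ?g = "\<lambda>z. r * sinh z - sinh (r * z)"
  have "?g 0 \<le> ?g z"
  proof (rule DERIV_nonneg_imp_nondecreasing[OF z])
    fix x :: real assume x: "0 \<le> x" "x \<le> z"
    have "(?g has_real_derivative (r * cosh x - cosh (r * x) * r)) (at x)"
      by (auto intro!: derivative_eq_intros)
    moreover have "cosh (r * x) \<le> cosh x"
      using x r by (subst cosh_real_nonneg_le_iff) (auto simp: mult_left_le_one_le)
    hence "r * cosh x - cosh (r * x) * r \<ge> 0" using r by (simp add: algebra_simps mult_left_mono)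
    ultimately show "\<exists>y. (?g has_real_derivative y) (at x) \<and> y \<ge> 0" by blast
  qed
  thus ?thesis by simp
qed

lemma core:
  fixes r x y :: real
  assumes r: "0 < r" "r \<le> 1" and xy: "-r < x" "x < y" "y < r"
  defines "h \<equiv> ln ((r + y) * (r - x) / ((r + x) * (r - y)))"
  defines "rho \<equiv> 2 * arsinh ((y - x) / sqrt ((r\<^sup>2 - x\<^sup>2) * (r\<^sup>2 - y\<^sup>2)))"
  shows "h \<le> rho \<and> rho \<le> h / r \<and> (r = 1 \<longrightarrow> rho = h)"
proof -
  define A where "A = sqrt ((r + y) * (r - x))"
  define B where "B = sqrt ((r + x) * (r - y))"
  have pA: "(r + y) * (r - x) > 0" and pB: "(r + x) * (r - y) > 0" using xy by auto
  have A: "A > 0" "A\<^sup>2 = (r + y) * (r - x)" using pA by (auto simp: A_def)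
  have B: "B > 0" "B\<^sup>2 = (r + x) * (r - y)" using pB by (auto simp: B_def)
  have AB: "A * B = sqrt ((r\<^sup>2 - x\<^sup>2) * (r\<^sup>2 - y\<^sup>2))"
    unfolding A_def B_def by (simp add: real_sqrt_mult[symmetric] power2_eq_square algebra_simps)
  have "h = ln ((A / B)\<^sup>2)" unfolding h_def using A B by (simp add: power_divide)
  hence hH: "h = 2 * ln (A / B)" using A B by (simp add: ln_realpow)
  define H where "H = ln (A / B)"
  define S where "S = r * (y - x) / (A * B)"
  have "sinh H = (A / B - B / A) / 2" unfolding H_def using A B by (simp add: sinh_ln_real field_simps)
  also have "\<dots> = (A\<^sup>2 - B\<^sup>2) / (2 * (A * B))" using A B by (simp add: field_simps power2_eq_square)
  also have "\<dots> = S"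
  proof -
    have "A\<^sup>2 - B\<^sup>2 = 2 * (r * (y - x))" using A(2) B(2) by (simp add: algebra_simps)
    thus ?thesis unfolding S_def using A B by simp
  qed
  finally have sH: "sinh H = S" .
  have S0: "S \<ge> 0" unfolding S_def using A B xy r by auto
  have H0: "H \<ge> 0" using sH S0 by (metis sinh_0 sinh_real_le_iff)
  have rho: "rho = 2 * arsinh (S / r)" unfolding rho_def S_def AB[symmetric] using r by simp
  have h: "h = 2 * H" using hH H_def by simp
  have 1: "H \<le> arsinh (S / r)"
  proof -
    have "S \<le> S / r" using S0 r by (simp add: le_divide_eq mult_right_le_one_le)  
    hence "sinh H \<le> sinh (arsinh (S / r))" using sH by simp
    thus ?thesis by (metis sinh_real_le_iff)
  qed
  have 2: "arsinh (S / r) \<le> H / r"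
  proof -
    have "sinh (r * (H / r)) \<le> r * sinh (H / r)" using sinh_scale[of r "H / r"] r H0 by simp
    hence "S / r \<le> sinh (H / r)" using sH r by (simp add: divide_le_eq mult.commute)
    hence "sinh (arsinh (S / r)) \<le> sinh (H / r)" by simp
    thus ?thesis by (metis sinh_real_le_iff)
  qed
  show ?thesis unfolding rho h using 1 2 r sH by (auto simp: arsinh_sinh_real)
qed

theorem corollary3p6:
  fixes a b :: complex
  assumes "a \<in> unit_disk" and "b \<in> unit_disk" and "a \<noteq> b"
  defines "m \<equiv> infdist 0 (affine hull {a, b})"
  shows "hilbert_metric unit_disk a b \<le> rho_disk a b
         \<and> rho_disk a b \<le> hilbert_metric unit_disk a b / sqrt (1 - m\<^sup>2)
         \<and> (m = 0 \<longrightarrow> rho_disk a b = hilbert_metric unit_disk a b)"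
proof -
  have na: "cmod a < 1" and nb: "cmod b < 1" using assms(1,2) by (auto simp: unit_disk_def)
  define d where "d = b - a"
  define D where "D = cmod d"
  have D: "D > 0" using assms(3) by (simp add: D_def d_def)
  define \<beta> where "\<beta> = Re a * Re d + Im a * Im d"
  define x where "x = \<beta> / D"
  define y where "y = D + x"
  define t0 where "t0 = - x / D"
  define m0 where "m0 = cmod (a + of_real t0 * d)"
  have N: "(cmod (a + of_real t * d))\<^sup>2 = (cmod a)\<^sup>2 + 2 * t * \<beta> + t\<^sup>2 * D\<^sup>2" for t
    unfolding D_def \<beta>_def cmod_power2 by (simp add: power2_eq_square algebra_simps)
  have m0sq: "m0\<^sup>2 = (cmod a)\<^sup>2 - x\<^sup>2"
    unfolding m0_def N t0_def x_def using D by (simp add: power2_eq_square field_simps)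
  have N2: "(cmod (a + of_real t * d))\<^sup>2 = m0\<^sup>2 + (D * t + x)\<^sup>2" for t
    unfolding N m0sq x_def using D by (simp add: power2_eq_square field_simps)
  have m0ge: "m0 \<le> cmod (a + of_real t * d)" for t
  proof -
    have "m0\<^sup>2 \<le> (cmod (a + of_real t * d))\<^sup>2" unfolding N2 by simp
    thus ?thesis using m0_def by (simp add: power2_le_iff_abs_le)
  qed
  have hull: "affine hull {a, b} = range (\<lambda>t. a + of_real t * d)"
    unfolding affine_hull_2_alt d_def by (simp add: scaleR_conv_of_real)
  have mm: "m = m0"
  proof (rule antisym)
    show "m \<le> m0" unfolding m_def m0_def hull by (rule infdist_le2[where a="a + of_real t0 * d"]) auto
    show "m0 \<le> m" unfolding m_def hull
      by (subst infdist_notempty) (auto intro!: cINF_greatest m0ge)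
  qed
  have m00: "m0 \<ge> 0" unfolding m0_def by simp
  have xa: "(cmod a)\<^sup>2 = m0\<^sup>2 + x\<^sup>2" using m0sq by simp
  have yb: "(cmod b)\<^sup>2 = m0\<^sup>2 + y\<^sup>2" using N2[of 1] unfolding d_def y_def by simp
  have a2: "(cmod a)\<^sup>2 < 1" and b2: "(cmod b)\<^sup>2 < 1" using na nb
    by (simp_all add: abs_square_less_1)
  define r where "r = sqrt (1 - m0\<^sup>2)"
  have m01: "m0\<^sup>2 < 1" using a2 xa by (smt (verit) zero_le_power2)
  have r: "r > 0" "r\<^sup>2 = 1 - m0\<^sup>2" "r \<le> 1" using m01 m00 by (auto simp: r_def)
  have xr: "x\<^sup>2 < r\<^sup>2" using a2 xa r by simp
  have yr: "y\<^sup>2 < r\<^sup>2" using b2 yb r by simp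
  have "\<bar>x\<bar> < r" using real_sqrt_less_mono[OF xr] r by (simp add: r_def)
  hence x: "-r < x" "x < r" by auto
  have "\<bar>y\<bar> < r" using real_sqrt_less_mono[OF yr] r by (simp add: r_def)
  hence y: "-r < y" "y < r" by auto
  have xy: "x < y" using D y_def by simp
  define t1 where "t1 = (- r - x) / D"
  define t2 where "t2 = (r - x) / D"
  have t1: "t1 < 0" "D * t1 + x = - r" using x D by (auto simp: t1_def field_simps)
  have t2: "t2 > 1" "D * t2 + x = r" using y D by (auto simp: t2_def y_def field_simps)
  have fr: "frontier unit_disk = sphere 0 1" by (simp add: unit_disk_def)
  have onsph: "cmod (a + of_real t * d) = 1 \<longleftrightarrow> (D * t + x)\<^sup>2 = r\<^sup>2" for t
  proof -
    have "cmod (a + of_real t * d) = 1 \<longleftrightarrow> (cmod (a + of_real t * d))\<^sup>2 = 1"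
      by (simp add: abs_square_eq_1)
    also have "\<dots> \<longleftrightarrow> (D * t + x)\<^sup>2 = r\<^sup>2" unfolding N2 r by auto
    finally show ?thesis .
  qed
  have sq: "(z::real)\<^sup>2 = r\<^sup>2 \<longleftrightarrow> z = r \<or> z = - r" for z
    using r(1) by (metis power2_eq_iff)
  have U: "(THE u. u \<in> frontier unit_disk \<and> (\<exists>t::real. t < 0 \<and> u = a + of_real t * (b - a)))
     = a + of_real t1 * d"
  proof (rule the_equality)
    show "a + of_real t1 * d \<in> frontier unit_disk \<and> (\<exists>t::real. t < 0 \<and> a + of_real t1 * d = a + of_real t * (b - a))"
      unfolding fr using t1 onsph[of t1] d_def by auto
  next
    fix u assume "u \<in> frontier unit_disk \<and> (\<exists>t::real. t < 0 \<and> u = a + of_real t * (b - a))"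
    then obtain t where t: "t < 0" "u = a + of_real t * d" "cmod (a + of_real t * d) = 1"
      unfolding fr d_def by auto
    have "D * t + x = r \<or> D * t + x = - r" using t(3) onsph sq by auto
    moreover have "D * t < 0" using t D by (simp add: mult_pos_neg)
    ultimately have "D * t + x = - r" using x by auto
    hence "t = t1" using t1 D by (simp add: t1_def field_simps)
    thus "u = a + of_real t1 * d" using t by simp
  qed
  have V: "(THE v. v \<in> frontier unit_disk \<and> (\<exists>t::real. t > 1 \<and> v = a + of_real t * (b - a)))
     = a + of_real t2 * d"
  proof (rule the_equality)
    show "a + of_real t2 * d \<in> frontier unit_disk \<and> (\<exists>t::real. t > 1 \<and> a + of_real t2 * d = a + of_real t * (b - a))"
      unfolding fr using t2 onsph[of t2] d_def by auto
  next
    fix v assume "v \<in> frontier unit_disk \<and> (\<exists>t::real. t > 1 \<and> v = a + of_real t * (b - a))"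
    then obtain t where t: "t > 1" "v = a + of_real t * d" "cmod (a + of_real t * d) = 1"
      unfolding fr d_def by auto
    have "D * t + x = r \<or> D * t + x = - r" using t(3) onsph sq by auto
    moreover have "D * t > D" using t D by simp
    ultimately have "D * t + x = r" using y y_def by auto
    hence "t = t2" using t2 D by (simp add: t2_def field_simps)
    thus "v = a + of_real t2 * d" using t by simp
  qed
  have e1: "cmod (a + of_real t1 * d - b) = r + y"
  proof -
    have "a + of_real t1 * d - b = of_real (t1 - 1) * d" by (simp add: d_def algebra_simps)
    moreover have "cmod (of_real (t1 - 1) * d) = \<bar>t1 - 1\<bar> * D" by (simp only: norm_mult norm_of_real D_def)
    ultimately have "cmod (a + of_real t1 * d - b) = (1 - t1) * D" using t1 by simp
    thus ?thesis using t1 by (simp add: y_def algebra_simps)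
  qed
  have e2: "cmod (a - (a + of_real t2 * d)) = r - x"
  proof -
    have "cmod (a - (a + of_real t2 * d)) = t2 * D" using t2 by (simp add: D_def norm_mult)
    thus ?thesis using t2 by (simp add: algebra_simps)
  qed
  have e3: "cmod (a + of_real t1 * d - a) = r + x"
  proof -
    have "cmod (a + of_real t1 * d - a) = - t1 * D" using t1 by (simp add: D_def norm_mult)
    thus ?thesis using t1 by (simp add: algebra_simps)
  qed
  have e4: "cmod (b - (a + of_real t2 * d)) = r - y"
  proof -
    have "b - (a + of_real t2 * d) = of_real (1 - t2) * d" by (simp add: d_def algebra_simps)
    moreover have "cmod (of_real (1 - t2) * d) = \<bar>1 - t2\<bar> * D" by (simp only: norm_mult norm_of_real D_def)
    ultimately have "cmod (b - (a + of_real t2 * d)) = (t2 - 1) * D" using t2 by simp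
    thus ?thesis using t2 by (simp add: y_def algebra_simps)
  qed
  have hil: "hilbert_metric unit_disk a b = ln ((r + y) * (r - x) / ((r + x) * (r - y)))"
    unfolding hilbert_metric_def Let_def U V e1 e2 e3 e4 by simp
  have rh: "rho_disk a b = 2 * arsinh ((y - x) / sqrt ((r\<^sup>2 - x\<^sup>2) * (r\<^sup>2 - y\<^sup>2)))"
  proof -
    have "cmod (a - b) = y - x" using y_def D_def d_def by (simp add: norm_minus_commute)
    moreover have "1 - (cmod a)\<^sup>2 = r\<^sup>2 - x\<^sup>2" "1 - (cmod b)\<^sup>2 = r\<^sup>2 - y\<^sup>2" using xa yb r by auto
    ultimately show ?thesis unfolding rho_disk_def by simp
  qed
  have sm: "sqrt (1 - m\<^sup>2) = r" using mm r_def by simp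
  have m0r: "m = 0 \<Longrightarrow> r = 1" using mm r_def by simp
  show ?thesis unfolding hil rh sm using core[OF r(1) r(3) x(1) xy y(2)] m0r by blast
qed
end
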